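(* $$\lim_{n\to\infty}\left(\frac{\alpha_n(1\text{-}23\text{-}4)}{n!}\right)^{1/n}=0.$$
   Context: A permutation $\pi=\pi_1\cdots\pi_n$ of $\{1,\dots,n\}$ contains the generalized pattern $1\text{-}23\text{-}4$ if there are indices $a<b<b+1<c$ with $\pi_a<\pi_b<\pi_{b+1}<\pi_c$; otherwise it avoids it. $\alpha_n(1\text{-}23\text{-}4)$ is the number of permutations of $\{1,\dots,n\}$ avoiding it. *)

theory Defs
  imports "HOL-Analysis.Analysis" "HOL-Combinatorics.Permutations"
begin

definition contains_1_23_4 :: "nat \<Rightarrow> (nat \<Rightarrow> nat) \<Rightarrow> bool" where
  "contains_1_23_4 n p \<longleftrightarrow>
     (\<exists>a b c. 1 \<le> a \<and> a < b \<and> b + 1 < c \<and> c \<le> n \<and>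
        p a < p b \<and> p b < p (b + 1) \<and> p (b + 1) < p c)"

definition alpha_1_23_4 :: "nat \<Rightarrow> nat" where
  "alpha_1_23_4 n = card {p. p permutes {1..n} \<and> \<not> contains_1_23_4 n p}"

end

theory Submission
  imports Defs
begin

definition lrmin :: "(nat \<Rightarrow> nat) \<Rightarrow> nat \<Rightarrow> bool" where
  "lrmin p i \<longleftrightarrow> (\<forall>j. 1 \<le> j \<and> j < i \<longrightarrow> p i < p j)"
definition rlmax :: "nat \<Rightarrow> (nat \<Rightarrow> nat) \<Rightarrow> nat \<Rightarrow> bool" where
  "rlmax n p i \<longleftrightarrow> (\<forall>j. i < j \<and> j \<le> n \<longrightarrow> p j < p i)"
definition Lset :: "nat \<Rightarrow> (nat \<Rightarrow> nat) \<Rightarrow> nat set" where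
  "Lset n p = {i\<in>{1..n}. lrmin p i}"
definition Rset :: "nat \<Rightarrow> (nat \<Rightarrow> nat) \<Rightarrow> nat set" where
  "Rset n p = {i\<in>{1..n}. rlmax n p i}"
definition colf :: "nat set \<Rightarrow> nat set \<Rightarrow> nat \<Rightarrow> nat" where
  "colf A B i = (if i \<in> A then 0 else if i \<in> B then 1 else 2 + card {j\<in>A \<union> B. j < i})"

lemma rank_eq:
  fixes V :: "nat set"
  assumes "finite V" "x \<in> V" "y \<in> V" "card {v\<in>V. x < v} = card {v\<in>V. y < v}"
  shows "x = y"
proof (rule ccontr)
  assume ne: "x \<noteq> y"
  have *: "card {v\<in>V. b < v} < card {v\<in>V. a < v}" if "a \<in> V" "b \<in> V" "a < b" for a b
    by (rule psubset_card_mono) (use assms(1) that in auto)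
  show False
  proof (cases "x < y")
    case True then show ?thesis using *[of x y] assms by simp
  next
    case False then have "y < x" using ne by simp
    then show ?thesis using *[of y x] assms by simp
  qed
qed

lemma rank_perm:
  fixes p :: "nat \<Rightarrow> nat" and S :: "nat set"
  assumes p: "p permutes S" and fin: "finite S" and i: "i \<in> S"
    and dec: "\<forall>i\<in>S. \<forall>j\<in>S. i < j \<and> cp i = cp j \<longrightarrow> p j < p i"
  shows "card {v\<in>{v\<in>S. cp (inv p v) = cp i}. p i < v} = card {j\<in>S. cp j = cp i \<and> j < i}"
proof -
  have inj: "inj_on p {j\<in>S. cp j = cp i \<and> j < i}"
    by (rule inj_on_subset[OF permutes_inj[OF p]]) simp
  have "{v\<in>{v\<in>S. cp (inv p v) = cp i}. p i < v} = p ` {j\<in>S. cp j = cp i \<and> j < i}"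
  proof (intro equalityI subsetI)
    fix v assume v: "v \<in> {v\<in>{v\<in>S. cp (inv p v) = cp i}. p i < v}"
    define j where "j = inv p v"
    have vS: "v \<in> S" using v by auto
    have jS: "j \<in> S" unfolding j_def using vS p by (simp add: permutes_in_image permutes_inv)
    have pj: "p j = v" unfolding j_def using p by (simp add: permutes_inverses(1))
    have cj: "cp j = cp i" using v j_def by auto
    have "j < i"
    proof -
      have "p i < v" using v by simp
      then have "j \<noteq> i" using pj by auto
      moreover have "\<not> i < j"
      proof
        assume "i < j"
        then have "p j < p i" using dec i jS cj by metis
        then show False using pj v by simp
      qed
      ultimately show ?thesis by simp
    qed
    then show "v \<in> p ` {j\<in>S. cp j = cp i \<and> j < i}" using pj jS cj by blast
  next
    fix v assume "v \<in> p ` {j\<in>S. cp j = cp i \<and> j < i}"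
    then obtain j where j: "j \<in> S" "cp j = cp i" "j < i" "v = p j" by auto
    have "inv p (p j) = j" using p by (simp add: permutes_inverses(2))
    moreover have "p i < p j" using dec j i by metis
    moreover have "p j \<in> S" using j(1) p by (simp add: permutes_in_image)
    ultimately show "v \<in> {v\<in>{v\<in>S. cp (inv p v) = cp i}. p i < v}"
      using j by simp
  qed
  then show ?thesis using card_image[OF inj] by simp
qed

lemma unique_enc:
  fixes p q :: "nat \<Rightarrow> nat" and S :: "nat set"
  assumes p: "p permutes S" and q: "q permutes S" and fin: "finite S"
    and c1: "\<forall>i\<in>S. cp i = cq i" and c2: "\<forall>v\<in>S. cp (inv p v) = cq (inv q v)"
    and dp: "\<forall>i\<in>S. \<forall>j\<in>S. i < j \<and> cp i = cp j \<longrightarrow> p j < p i"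
    and dq: "\<forall>i\<in>S. \<forall>j\<in>S. i < j \<and> cq i = cq j \<longrightarrow> q j < q i"
  shows "p = q"
proof
  fix i
  show "p i = q i"
  proof (cases "i \<in> S")
    case False then show ?thesis using p q by (simp add: permutes_not_in)
  next
    case True
    define V where "V = {v\<in>S. cp (inv p v) = cp i}"
    have V2: "V = {v\<in>S. cq (inv q v) = cq i}" unfolding V_def using c1 c2 True by auto
    have J: "{j\<in>S. cp j = cp i \<and> j < i} = {j\<in>S. cq j = cq i \<and> j < i}" using c1 True by auto
    have e1: "card {v\<in>V. p i < v} = card {j\<in>S. cp j = cp i \<and> j < i}"
      unfolding V_def by (rule rank_perm[OF p fin True dp])
    have e2: "card {v\<in>V. q i < v} = card {j\<in>S. cq j = cq i \<and> j < i}"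
      unfolding V2 by (rule rank_perm[OF q fin True dq])
    have "p i \<in> V" unfolding V_def using True p by (simp add: permutes_in_image permutes_inverses(2))
    moreover have "q i \<in> V" unfolding V2 using True q by (simp add: permutes_in_image permutes_inverses(2))
    moreover have "finite V" unfolding V_def using fin by simp
    ultimately show ?thesis using rank_eq e1 e2 J by metis
  qed
qed

lemma consec:
  fixes p :: "nat \<Rightarrow> nat"
  assumes inj: "inj p" and av: "\<not> contains_1_23_4 n p"
    and k: "1 \<le> k" "k + 1 \<le> n" and l: "\<not> lrmin p k" and r: "\<not> rlmax n p (k+1)"
  shows "p (k+1) < p k"
proof (rule ccontr)
  assume "\<not> p (k+1) < p k"
  moreover have "p (k+1) \<noteq> p k" using inj by (metis injD n_not_Suc_n add.commute plus_1_eq_Suc)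
  ultimately have lt: "p k < p (k+1)" by simp
  obtain a where a0: "1 \<le> a" "a < k" "\<not> p k < p a" using l unfolding lrmin_def by auto
  have "p a \<noteq> p k" using inj a0(2) by (metis injD less_irrefl)
  then have a: "1 \<le> a" "a < k" "p a < p k" using a0 by auto
  obtain c where c: "k + 1 < c" "c \<le> n" "\<not> p c < p (k+1)" using r unfolding rlmax_def by auto
  have "p c \<noteq> p (k+1)" using inj c(1) by (metis injD less_irrefl)
  then have "p (k+1) < p c" using c(3) by simp
  then have "contains_1_23_4 n p" unfolding contains_1_23_4_def using a c lt by blast
  then show False using av by simp
qed

lemma chain:
  fixes p :: "nat \<Rightarrow> nat"
  assumes inj: "inj p" and av: "\<not> contains_1_23_4 n p"
    and O: "\<forall>k. i \<le> k \<and> k \<le> i + Suc d \<longrightarrow> 1 \<le> k \<and> k \<le> n \<and> \<not> lrmin p k \<and> \<not> rlmax n p k"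
  shows "p (i + Suc d) < p i"
  using O
proof (induction d)
  case 0
  have "p (i+1) < p i" by (rule consec[OF inj av]) (use 0 in auto)
  then show ?case by simp
next
  case (Suc d)
  have "p (i + Suc d) < p i" using Suc by auto
  moreover have "p (i + Suc d + 1) < p (i + Suc d)"
    by (rule consec[OF inj av]) (use Suc.prems in auto)
  ultimately show ?case by simp
qed

lemma dec_class:
  fixes p :: "nat \<Rightarrow> nat"
  assumes inj: "inj p" and av: "\<not> contains_1_23_4 n p"
    and i: "i \<in> {1..n}" and j: "j \<in> {1..n}" and ij: "i < j"
    and c: "colf (Lset n p) (Rset n p) i = colf (Lset n p) (Rset n p) j"
  shows "p j < p i"
proof -
  let ?A = "Lset n p" and ?B = "Rset n p"
  show ?thesis
  proof (cases "i \<in> ?A")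
    case True
    then have "colf ?A ?B j = 0" using c by (simp add: colf_def)
    then have "j \<in> ?A" by (simp add: colf_def split: if_splits)
    then show ?thesis using i ij unfolding Lset_def lrmin_def by auto
  next
    case nA: False
    show ?thesis
    proof (cases "i \<in> ?B")
      case True
      then have "colf ?A ?B j = 1" using c nA by (simp add: colf_def)
      then have "j \<in> ?B" by (simp add: colf_def split: if_splits)
      then show ?thesis using True j ij unfolding Rset_def rlmax_def by auto
    next
      case nB: False
      have "colf ?A ?B j \<ge> 2" using c nA nB by (simp add: colf_def)
      then have jn: "j \<notin> ?A \<union> ?B" by (simp add: colf_def split: if_splits)
      have cc: "card {k\<in>?A \<union> ?B. k < i} = card {k\<in>?A \<union> ?B. k < j}"
        using c nA nB jn by (simp add: colf_def)
      have fin: "finite {k\<in>?A \<union> ?B. k < j}" by (simp add: Lset_def Rset_def)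
      have sub: "{k\<in>?A \<union> ?B. k < i} \<subseteq> {k\<in>?A \<union> ?B. k < j}" using ij by auto
      have eq: "{k\<in>?A \<union> ?B. k < i} = {k\<in>?A \<union> ?B. k < j}"
        using card_subset_eq[OF fin sub cc] .
      obtain d where d: "j = i + Suc d" using less_imp_Suc_add[OF ij] by auto
      have "\<forall>k. i \<le> k \<and> k \<le> i + Suc d \<longrightarrow> 1 \<le> k \<and> k \<le> n \<and> \<not> lrmin p k \<and> \<not> rlmax n p k"
      proof (intro allI impI)
        fix k assume k: "i \<le> k \<and> k \<le> i + Suc d"
        have kS: "1 \<le> k \<and> k \<le> n" using k i j d by auto
        have "k \<notin> ?A \<union> ?B"
        proof (cases "k = j")
          case True then show ?thesis using jn by simp
        next
          case False
          then have "k < j" using k d by simp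
          show ?thesis
          proof
            assume "k \<in> ?A \<union> ?B"
            then have "k \<in> {k\<in>?A \<union> ?B. k < j}" using \<open>k < j\<close> by simp
            then have "k < i" using eq by blast
            then show False using k by simp
          qed
        qed
        then show "1 \<le> k \<and> k \<le> n \<and> \<not> lrmin p k \<and> \<not> rlmax n p k"
          using kS by (auto simp: Lset_def Rset_def)
      qed
      from chain[OF inj av this] show ?thesis using d by simp
    qed
  qed
qed

definition enc :: "nat \<Rightarrow> (nat \<Rightarrow> nat) \<Rightarrow> (nat \<Rightarrow> nat) \<times> (nat \<Rightarrow> nat)" where
  "enc n p = (restrict (colf (Lset n p) (Rset n p)) {1..n},
              restrict (\<lambda>v. colf (Lset n p) (Rset n p) (inv p v)) {1..n})"

definition Av :: "nat \<Rightarrow> (nat \<Rightarrow> nat) set" where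
  "Av n = {p. p permutes {1..n} \<and> \<not> contains_1_23_4 n p}"

lemma enc_inj: "inj_on (enc n) (Av n)"
proof (rule inj_onI)
  fix p q assume p: "p \<in> Av n" and q: "q \<in> Av n" and e: "enc n p = enc n q"
  have pp: "p permutes {1..n}" "\<not> contains_1_23_4 n p" using p by (auto simp: Av_def)
  have qq: "q permutes {1..n}" "\<not> contains_1_23_4 n q" using q by (auto simp: Av_def)
  have e1: "restrict (colf (Lset n p) (Rset n p)) {1..n} = restrict (colf (Lset n q) (Rset n q)) {1..n}"
    using e by (simp add: enc_def)
  have e2: "restrict (\<lambda>v. colf (Lset n p) (Rset n p) (inv p v)) {1..n} = restrict (\<lambda>v. colf (Lset n q) (Rset n q) (inv q v)) {1..n}"
    using e by (simp add: enc_def)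
  show "p = q"
  proof (rule unique_enc[OF pp(1) qq(1)])
    show "finite {1..n::nat}" by simp
    show "\<forall>i\<in>{1..n}. colf (Lset n p) (Rset n p) i = colf (Lset n q) (Rset n q) i"
      using e1 by (metis restrict_apply')
    show "\<forall>v\<in>{1..n}. colf (Lset n p) (Rset n p) (inv p v) = colf (Lset n q) (Rset n q) (inv q v)"
      using e2 by (metis (no_types, lifting) restrict_apply')
    show "\<forall>i\<in>{1..n}. \<forall>j\<in>{1..n}. i < j \<and> colf (Lset n p) (Rset n p) i = colf (Lset n p) (Rset n p) j \<longrightarrow> p j < p i"
      using dec_class[OF permutes_inj[OF pp(1)] pp(2)] by blast
    show "\<forall>i\<in>{1..n}. \<forall>j\<in>{1..n}. i < j \<and> colf (Lset n q) (Rset n q) i = colf (Lset n q) (Rset n q) j \<longrightarrow> q j < q i"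
      using dec_class[OF permutes_inj[OF qq(1)] qq(2)] by blast
  qed
qed

definition Fs :: "nat \<Rightarrow> nat set \<Rightarrow> nat \<Rightarrow> nat set" where
  "Fs s X v = (if v \<in> X then {2..s+2} else {0,1})"

definition Qs :: "nat \<Rightarrow> (nat set \<times> nat set \<times> nat set) set" where
  "Qs n = {(A,B,X). A \<subseteq> {1..n} \<and> B \<subseteq> {1..n} \<and> X \<subseteq> {1..n} \<and> card X + card (A \<union> B) = n}"

definition Ts :: "nat \<Rightarrow> ((nat \<Rightarrow> nat) \<times> (nat \<Rightarrow> nat)) set" where
  "Ts n = (\<Union>(A,B,X)\<in>Qs n. {restrict (colf A B) {1..n}} \<times> PiE {1..n} (Fs (card (A \<union> B)) X))"

lemma Qs_sub: "Qs n \<subseteq> Pow {1..n} \<times> Pow {1..n} \<times> Pow {1..n}"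
  by (auto simp: Qs_def)

lemma Qs_fin: "finite (Qs n)"
  by (rule finite_subset[OF Qs_sub]) simp

lemma Qs_card: "card (Qs n) \<le> 8 ^ n"
proof -
  have "card (Qs n) \<le> card (Pow {1..n} \<times> Pow {1..n} \<times> Pow {1..n::nat})"
    by (rule card_mono[OF _ Qs_sub]) simp
  also have "\<dots> = 2^n * 2^n * 2^n" by (simp add: card_cartesian_product card_Pow)
  also have "\<dots> = 8^n" by (simp add: power_mult_distrib[symmetric])
  finally show ?thesis .
qed

lemma piece_card:
  assumes X: "X \<subseteq> {1..n}" "card X + s = n" and M: "\<forall>t\<le>n. (t+1)^(n-t) \<le> M"
  shows "card (PiE {1..n} (Fs s X)) \<le> M * 2^n"
proof -
  have "card (PiE {1..n} (Fs s X)) = (\<Prod>v\<in>{1..n}. card (Fs s X v))"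
    by (simp add: card_PiE)
  also have "\<dots> = (\<Prod>v\<in>{1..n}. if v \<in> X then s + 1 else 2)"
    by (rule prod.cong) (auto simp: Fs_def)
  also have "\<dots> = (\<Prod>v\<in>{1..n} \<inter> {v. v \<in> X}. s + 1) * (\<Prod>v\<in>{1..n} \<inter> - {v. v \<in> X}. 2)"
    by (rule prod.If_cases) simp
  also have "\<dots> = (s+1) ^ card ({1..n} \<inter> {v. v \<in> X}) * 2 ^ card ({1..n} \<inter> - {v. v \<in> X})"
    by simp
  also have "\<dots> \<le> (s+1) ^ (n - s) * 2 ^ n"
  proof (rule mult_le_mono)
    have "{1..n} \<inter> {v. v \<in> X} = X" using X by auto
    moreover have "card X = n - s" using X by simp
    ultimately show "(s+1) ^ card ({1..n} \<inter> {v. v \<in> X}) \<le> (s+1) ^ (n - s)" by simp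
    have "card ({1..n} \<inter> - {v. v \<in> X}) \<le> card {1..n}" by (rule card_mono) auto
    then show "2 ^ card ({1..n} \<inter> - {v. v \<in> X}) \<le> (2::nat) ^ n"
      by (intro power_increasing) auto
  qed
  also have "\<dots> \<le> M * 2^n" using M X by simp
  finally show ?thesis .
qed

lemma Ts_fin: "finite (Ts n)"
  unfolding Ts_def using Qs_fin by (auto intro!: finite_PiE simp: Fs_def)

lemma Ts_card:
  assumes M: "\<forall>t\<le>n. (t+1)^(n-t) \<le> M"
  shows "card (Ts n) \<le> 16^n * M"
proof -
  have "card (Ts n) \<le> (\<Sum>q\<in>Qs n. card ((\<lambda>(A,B,X). {restrict (colf A B) {1..n}} \<times> PiE {1..n} (Fs (card (A \<union> B)) X)) q))"
    unfolding Ts_def by (rule card_UN_le[OF Qs_fin])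
  also have "\<dots> \<le> card (Qs n) * (M * 2^n)"
  proof -
   have "\<forall>q\<in>Qs n. card ((\<lambda>(A,B,X). {restrict (colf A B) {1..n}} \<times> PiE {1..n} (Fs (card (A \<union> B)) X)) q) \<le> M * 2^n"
   proof
    fix q assume q: "q \<in> Qs n"
    obtain A B X where qe: "q = (A,B,X)" by (cases q) auto
    have X: "X \<subseteq> {1..n}" "card X + card (A \<union> B) = n" using q qe by (auto simp: Qs_def)
    show "card ((\<lambda>(A,B,X). {restrict (colf A B) {1..n}} \<times> PiE {1..n} (Fs (card (A \<union> B)) X)) q) \<le> M * 2^n"
      using piece_card[OF X M] qe by (simp add: card_cartesian_product)
   qed
   from sum_bounded_above[OF bspec[OF this]] show ?thesis by simp
  qed
  also have "\<dots> \<le> 8^n * (M * 2^n)" using Qs_card by simp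
  also have "\<dots> = 16^n * M"
  proof -
    have "(8::nat)^n * 2^n = 16^n" by (simp add: power_mult_distrib[symmetric])
    then show ?thesis by (simp add: algebra_simps)
  qed
  finally show ?thesis .
qed

lemma enc_in:
  assumes p: "p \<in> Av n"
  shows "enc n p \<in> Ts n"
proof -
  let ?S = "{1..n::nat}"
  let ?A = "Lset n p" and ?B = "Rset n p"
  have pp: "p permutes ?S" using p by (simp add: Av_def)
  have AB: "?A \<union> ?B \<subseteq> ?S" by (auto simp: Lset_def Rset_def)
  define Ob where "Ob = ?S - (?A \<union> ?B)"
  define X where "X = p ` Ob"
  have XS: "X \<subseteq> ?S" unfolding X_def Ob_def using permutes_image[OF pp] by blast
  have cX: "card X = card Ob" unfolding X_def
    by (rule card_image) (rule inj_on_subset[OF permutes_inj[OF pp]], simp)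
  have cO: "card Ob = n - card (?A \<union> ?B)" unfolding Ob_def
    using card_Diff_subset[OF finite_subset[OF AB] AB] by simp
  have cAB: "card (?A \<union> ?B) \<le> n" using card_mono[OF _ AB] by simp
  have Q: "(?A, ?B, X) \<in> Qs n" unfolding Qs_def using XS cX cO cAB
    by (auto simp: Lset_def Rset_def)
  have second: "restrict (\<lambda>v. colf ?A ?B (inv p v)) ?S \<in> PiE ?S (Fs (card (?A \<union> ?B)) X)"
  proof (rule restrict_PiE_iff[THEN iffD2], intro ballI)
    fix v assume v: "v \<in> ?S"
    define i where "i = inv p v"
    have "inv p permutes ?S" by (rule permutes_inv[OF pp])
    then have iS: "i \<in> ?S" unfolding i_def using v by (simp only: permutes_in_image)
    have pi: "p i = v" unfolding i_def using pp by (simp add: permutes_inverses(1))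
    show "colf ?A ?B (inv p v) \<in> Fs (card (?A \<union> ?B)) X v"
    proof (cases "v \<in> X")
      case True
      then obtain ob where ob: "ob \<in> Ob" "v = p ob" unfolding X_def by auto
      have "inv p v = ob" using ob pp by (simp add: permutes_inverses(2))
      then have io: "inv p v \<in> Ob" using ob by simp
      have "card {j\<in>?A \<union> ?B. j < inv p v} \<le> card (?A \<union> ?B)"
        by (rule card_mono) (use finite_subset[OF AB] in auto)
      then show ?thesis using io True unfolding Ob_def by (simp add: colf_def Fs_def)
    next
      case False
      then have "i \<notin> Ob" using pi unfolding X_def by auto
      then have "i \<in> ?A \<union> ?B" using iS unfolding Ob_def by auto
      then show ?thesis using False unfolding i_def[symmetric] by (auto simp: colf_def Fs_def)
    qed
  qed
  show ?thesis unfolding Ts_def enc_def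
    by (rule UN_I[OF Q]) (use second in simp)
qed

lemma alpha_bound:
  assumes M: "\<forall>t\<le>n. (t+1)^(n-t) \<le> M"
  shows "alpha_1_23_4 n \<le> 16^n * M"
proof -
  have "alpha_1_23_4 n = card (Av n)" by (simp add: alpha_1_23_4_def Av_def)
  also have "\<dots> = card (enc n ` Av n)" by (rule card_image[OF enc_inj, symmetric])
  also have "\<dots> \<le> card (Ts n)" by (rule card_mono[OF Ts_fin]) (auto intro: enc_in)
  also have "\<dots> \<le> 16^n * M" by (rule Ts_card[OF M])
  finally show ?thesis .
qed

lemma fact_lower: "(real n / exp 1) ^ n \<le> fact n"
proof -
  have s: "summable (\<lambda>k. real n ^ k / fact k)"
    using exp_converges[of "real n"] by (simp add: sums_iff divide_inverse mult.commute)
  have "real n ^ n / fact n = (\<Sum>k\<in>{n}. real n ^ k / fact k)" by simp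
  also have "\<dots> \<le> (\<Sum>k. real n ^ k / fact k)"
    by (rule sum_le_suminf[OF s]) auto
  also have "\<dots> = exp (real n)"
    using exp_converges[of "real n"] by (simp add: sums_iff divide_inverse mult.commute)
  finally have "real n ^ n / fact n \<le> exp (real n)" .
  then have "real n ^ n \<le> exp (real n) * fact n" by (simp add: divide_le_eq)
  moreover have "exp (real n) = exp 1 ^ n" using exp_of_nat_mult[of n "1::real"] by simp
  ultimately show ?thesis by (simp add: power_divide divide_le_eq mult.commute)
qed

lemma M_bound:
  fixes n t :: nat and K :: real
  assumes n: "n \<ge> 1" and t: "t \<le> n" and K: "K > 0"
  shows "real ((t+1)^(n-t)) \<le> (real n * max (1/K) (exp 1 * real n powr (-1/K))) ^ n"
proof (cases "real (t+1) \<le> real n / K")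
  case True
  have "real ((t+1)^(n-t)) \<le> real (t+1) ^ n"
    by (simp del: of_nat_Suc add: power_increasing t)
  also have "\<dots> \<le> (real n / K) ^ n" by (rule power_mono[OF True]) simp
  also have "\<dots> \<le> (real n * max (1/K) (exp 1 * real n powr (-1/K))) ^ n"
  proof (rule power_mono)
    have "real n * (1/K) \<le> real n * max (1/K) (exp 1 * real n powr (-1/K))"
      by (rule mult_left_mono) auto
    then show "real n / K \<le> real n * max (1/K) (exp 1 * real n powr (-1/K))" by simp
  qed (use K in simp)
  finally show ?thesis .
next
  case False
  have n0: "real n \<ge> 1" using n by simp
  have "real ((t+1)^(n-t)) \<le> real n ^ (n - t)"
  proof (cases "t = n")
    case True then show ?thesis by simp
  next
    case False then have "t + 1 \<le> n" using t by simp
    then show ?thesis by (simp del: of_nat_Suc add: power_mono)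
  qed
  also have "\<dots> = real n powr real (n - t)" using n0 by (simp add: powr_realpow)
  also have "\<dots> \<le> real n powr (real n - real n / K + 1)"
    by (rule powr_mono[OF _ n0]) (use False t in \<open>simp add: of_nat_diff\<close>)
  also have "\<dots> = real n * real n powr (real n * (1 - 1/K))"
  proof -
    have "real n powr (real n - real n / K + 1) = real n powr (real n * (1 - 1/K)) * real n powr 1"
      by (subst powr_add[symmetric]) (simp add: algebra_simps)
    then show ?thesis using n0 by simp
  qed
  also have "\<dots> \<le> exp (real n) * real n powr (real n * (1 - 1/K))"
  proof (rule mult_right_mono)
    show "real n \<le> exp (real n)" using exp_ge_add_one_self[of "real n"] by linarith
  qed simp
  also have "\<dots> = (exp 1 * real n powr (1 - 1/K)) ^ n"
  proof -
    have "real n powr (real n * (1 - 1/K)) = (real n powr (1 - 1/K)) ^ n"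
    proof -
      have "real n powr (real n * (1 - 1/K)) = (real n powr (1 - 1/K)) powr real n"
        by (simp add: powr_powr mult.commute)
      also have "\<dots> = (real n powr (1 - 1/K)) ^ n"
        by (rule powr_realpow) (use n0 in simp)
      finally show ?thesis .
    qed
    moreover have "exp (real n) = exp 1 ^ n" using exp_of_nat_mult[of n "1::real"] by simp
    ultimately show ?thesis by (simp add: power_mult_distrib)
  qed
  also have "\<dots> = (real n * (exp 1 * real n powr (-1/K))) ^ n"
  proof -
    have "real n powr (1 - 1/K) = real n * real n powr (-1/K)"
    proof -
      have "real n powr (1 + (-1/K)) = real n powr 1 * real n powr (-1/K)" by (rule powr_add)
      then show ?thesis using n0 by simp
    qed
    then show ?thesis by (simp only: mult.left_commute)
  qed
  also have "\<dots> \<le> (real n * max (1/K) (exp 1 * real n powr (-1/K))) ^ n"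
    by (rule power_mono) (use n0 in auto)
  finally show ?thesis .
qed

lemma root_bound:
  fixes K :: real
  assumes n: "n \<ge> 1" and K: "K > 0"
  shows "root n (real (alpha_1_23_4 n) / fact n) \<le> 16 * exp 1 * max (1/K) (exp 1 * real n powr (-1/K))"
proof -
  define m where "m = max (1/K) (exp 1 * real n powr (-1/K))"
  have m0: "m \<ge> 0" unfolding m_def using K by (simp add: le_max_iff_disj)
  define M where "M = Max ((\<lambda>t. (t+1)^(n-t)) ` {..n})"
  have Mb: "\<forall>t\<le>n. (t+1)^(n-t) \<le> M" unfolding M_def by (auto intro: Max_ge)
  have "M \<in> (\<lambda>t. (t+1)^(n-t)) ` {..n}" unfolding M_def by (rule Max_in) auto
  then obtain t where t: "t \<le> n" "M = (t+1)^(n-t)" by auto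
  have "real (alpha_1_23_4 n) \<le> real (16^n * M)" using alpha_bound[OF Mb] by linarith
  also have "\<dots> = 16^n * real M" by simp
  also have "\<dots> \<le> 16^n * (real n * m) ^ n"
  proof (rule mult_left_mono)
    show "real M \<le> (real n * m) ^ n" using M_bound[OF n t(1) K] t(2) unfolding m_def by simp
  qed simp
  also have "\<dots> = (16 * exp 1 * m) ^ n * (real n / exp 1) ^ n"
  proof -
    have "(16 * exp 1 * m) * (real n / exp 1) = 16 * (real n * m)" by (simp add: field_simps)
    then show ?thesis by (metis power_mult_distrib)
  qed
  also have "\<dots> \<le> (16 * exp 1 * m) ^ n * fact n"
    by (rule mult_left_mono[OF fact_lower]) (use m0 in simp)
  finally have "real (alpha_1_23_4 n) / fact n \<le> (16 * exp 1 * m) ^ n"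
    by (simp only: pos_divide_le_eq[OF fact_gt_zero])
  then have "root n (real (alpha_1_23_4 n) / fact n) \<le> root n ((16 * exp 1 * m) ^ n)"
    by (rule real_root_le_mono[rotated]) (use n in simp)
  also have "\<dots> = 16 * exp 1 * m"
    by (rule real_root_power_cancel) (use n m0 in simp_all)
  finally show ?thesis unfolding m_def .
qed

theorem mainTheorem11:
  shows "(\<lambda>n. root n (real (alpha_1_23_4 n) / fact n)) \<longlonglongrightarrow> 0"
proof (rule order_tendstoI)
  fix a :: real assume "a < 0"
  then show "\<forall>\<^sub>F n in sequentially. a < root n (real (alpha_1_23_4 n) / fact n)"
    by (intro always_eventually allI, rule less_le_trans[OF _ real_root_ge_zero]) auto
next
  fix \<epsilon> :: real assume e: "0 < \<epsilon>"
  define K where "K = 32 * exp 1 / \<epsilon>"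
  have K: "K > 0" unfolding K_def using e by simp
  have "(\<lambda>n. real n powr (-1/K)) \<longlonglongrightarrow> 0"
    by (rule tendsto_neg_powr[OF _ filterlim_real_sequentially]) (use K in simp)
  then have "(\<lambda>n. exp 1 * real n powr (-1/K)) \<longlonglongrightarrow> exp 1 * 0"
    by (intro tendsto_mult tendsto_const)
  then have ev: "\<forall>\<^sub>F n in sequentially. exp 1 * real n powr (-1/K) < \<epsilon> / (16 * exp 1)"
    by (rule order_tendstoD(2)) (use e in simp)
  have a1: "1/K < \<epsilon> / (16 * exp 1)" unfolding K_def using e by (simp add: field_simps)
  show "\<forall>\<^sub>F n in sequentially. root n (real (alpha_1_23_4 n) / fact n) < \<epsilon>"
    using ev eventually_ge_at_top[of "1::nat"]
  proof eventually_elim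
    case (elim n)
    have "max (1/K) (exp 1 * real n powr (-1/K)) < \<epsilon> / (16 * exp 1)"
      using elim a1 by simp
    then have "16 * exp 1 * max (1/K) (exp 1 * real n powr (-1/K)) < 16 * exp 1 * (\<epsilon> / (16 * exp 1))"
      by (rule mult_strict_left_mono) simp
    then have "16 * exp 1 * max (1/K) (exp 1 * real n powr (-1/K)) < \<epsilon>"
      by simp
    then show ?case using root_bound[OF elim(2) K] by linarith
  qed
qed

end
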